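(* Let $(R,\mathfrak m)$ be a one-dimensional Cohen–Macaulay local ring and let $I,J$ be regular ideals of $R$. Suppose there exists $q\in I$ with $IJ=qJ$. Then for every regular trace ideal $L$ of $R$ with $L\subseteq\mathrm{tr}_R(J)$, the equality $IL=qL$ holds.
   Context: An ideal is regular if it contains a non-zerodivisor. The trace ideal of an $R$-module $M$ is $\mathrm{tr}_R(M)=\sum_{f\in\mathrm{Hom}_R(M,R)}\mathrm{Im}f$; an ideal is a trace ideal if it equals $\mathrm{tr}_R(M)$ for some $M$. *)

theory Defs
  imports "HOL-Algebra.Algebra"
begin

definition nonzerodivisor :: "('a, 'b) ring_scheme \<Rightarrow> 'a \<Rightarrow> bool" where
  "nonzerodivisor R x \<longleftrightarrow> x \<in> carrier R \<and>
     (\<forall>y\<in>carrier R. x \<otimes>\<^bsub>R\<^esub> y = \<zero>\<^bsub>R\<^esub> \<longrightarrow> y = \<zero>\<^bsub>R\<^esub>)"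

definition regular_ideal :: "('a, 'b) ring_scheme \<Rightarrow> 'a set \<Rightarrow> bool" where
  "regular_ideal R I \<longleftrightarrow> ideal I R \<and> (\<exists>x\<in>I. nonzerodivisor R x)"

definition local_ring :: "('a, 'b) ring_scheme \<Rightarrow> 'a set \<Rightarrow> bool" where
  "local_ring R m \<longleftrightarrow> cring R \<and> maximalideal m R \<and>
     (\<forall>n. maximalideal n R \<longrightarrow> n = m)"

definition prime_chain :: "('a, 'b) ring_scheme \<Rightarrow> nat \<Rightarrow> (nat \<Rightarrow> 'a set) \<Rightarrow> bool" where
  "prime_chain R n P \<longleftrightarrow> (\<forall>i\<le>n. primeideal (P i) R) \<and> (\<forall>i<n. P i \<subset> P (Suc i))"

definition krull_dim_eq :: "('a, 'b) ring_scheme \<Rightarrow> nat \<Rightarrow> bool" where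
  "krull_dim_eq R n \<longleftrightarrow> (\<exists>P. prime_chain R n P) \<and> \<not> (\<exists>P. prime_chain R (Suc n) P)"

definition regular_sequence :: "('a, 'b) ring_scheme \<Rightarrow> 'a set \<Rightarrow> 'a list \<Rightarrow> bool" where
  "regular_sequence R m xs \<longleftrightarrow> set xs \<subseteq> m \<and>
     (\<forall>i<length xs. \<forall>y\<in>carrier R.
        (xs ! i) \<otimes>\<^bsub>R\<^esub> y \<in> Idl\<^bsub>R\<^esub> (set (take i xs)) \<longrightarrow> y \<in> Idl\<^bsub>R\<^esub> (set (take i xs))) \<and>
     Idl\<^bsub>R\<^esub> (set xs) \<noteq> carrier R"

definition depth_eq :: "('a, 'b) ring_scheme \<Rightarrow> 'a set \<Rightarrow> nat \<Rightarrow> bool" where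
  "depth_eq R m n \<longleftrightarrow> (\<exists>xs. regular_sequence R m xs \<and> length xs = n) \<and>
     \<not> (\<exists>xs. regular_sequence R m xs \<and> length xs = Suc n)"

definition one_dim_CM_local_ring :: "('a, 'b) ring_scheme \<Rightarrow> 'a set \<Rightarrow> bool" where
  "one_dim_CM_local_ring R m \<longleftrightarrow> noetherian_ring R \<and> local_ring R m \<and>
     krull_dim_eq R 1 \<and> depth_eq R m 1"

definition module_dual :: "('a, 'b) ring_scheme \<Rightarrow> ('a, 'm, 'c) module_scheme \<Rightarrow> ('m \<Rightarrow> 'a) set" where
  "module_dual R M = {f. f \<in> carrier M \<rightarrow> carrier R \<and>
     (\<forall>x\<in>carrier M. \<forall>y\<in>carrier M. f (x \<oplus>\<^bsub>M\<^esub> y) = f x \<oplus>\<^bsub>R\<^esub> f y) \<and>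
     (\<forall>a\<in>carrier R. \<forall>x\<in>carrier M. f (a \<odot>\<^bsub>M\<^esub> x) = a \<otimes>\<^bsub>R\<^esub> f x)}"

(* tr_R(M) = sum of the images of all f in Hom_R(M,R), i.e. the ideal they generate *)
definition trace_ideal :: "('a, 'b) ring_scheme \<Rightarrow> ('a, 'm, 'c) module_scheme \<Rightarrow> 'a set" where
  "trace_ideal R M = Idl\<^bsub>R\<^esub> (\<Union>f\<in>module_dual R M. f ` carrier M)"

definition ideal_module :: "('a, 'b) ring_scheme \<Rightarrow> 'a set \<Rightarrow> ('a, 'a) module" where
  "ideal_module R J = \<lparr> carrier = J, monoid.mult = monoid.mult R, monoid.one = monoid.one R,
     ring.zero = ring.zero R, ring.add = ring.add R, module.smult = monoid.mult R \<rparr>"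

end

theory Submission
  imports Defs
begin

lemma (in cring) quot_ideal:
  assumes A: "ideal A R" and i: "i \<in> carrier R" and q: "q \<in> carrier R"
  shows "ideal {l \<in> carrier R. \<exists>r\<in>A. i \<otimes> l = q \<otimes> r} R"
proof -
  define S where "S = {l \<in> carrier R. \<exists>r\<in>A. i \<otimes> l = q \<otimes> r}"
  have Ac: "\<And>r. r \<in> A \<Longrightarrow> r \<in> carrier R" by (rule ideal.Icarr[OF A])
  have Sc: "S \<subseteq> carrier R" unfolding S_def by blast
  have add: "x \<oplus> y \<in> S" if x: "x \<in> S" and y: "y \<in> S" for x y
  proof -
    obtain r where r: "r \<in> A" "i \<otimes> x = q \<otimes> r" and xc: "x \<in> carrier R" using x unfolding S_def by blast
    obtain s where s: "s \<in> A" "i \<otimes> y = q \<otimes> s" and yc: "y \<in> carrier R" using y unfolding S_def by blast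
    have "i \<otimes> (x \<oplus> y) = i \<otimes> x \<oplus> i \<otimes> y" using xc yc i by (rule r_distr)
    also have "\<dots> = q \<otimes> r \<oplus> q \<otimes> s" using r s by simp
    also have "\<dots> = q \<otimes> (r \<oplus> s)" using Ac[OF r(1)] Ac[OF s(1)] q by (rule r_distr[symmetric])
    finally have e: "i \<otimes> (x \<oplus> y) = q \<otimes> (r \<oplus> s)" .
    have "r \<oplus> s \<in> A" using r(1) s(1) by (rule additive_subgroup.a_closed[OF ideal.axioms(1)[OF A]])
    then show ?thesis using e xc yc unfolding S_def by blast
  qed
  have zero: "\<zero> \<in> S"
  proof -
    have "i \<otimes> \<zero> = q \<otimes> \<zero>" using i q by simp
    moreover have "\<zero> \<in> A" by (rule additive_subgroup.zero_closed[OF ideal.axioms(1)[OF A]])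
    ultimately show ?thesis unfolding S_def by blast
  qed
  have neg: "\<ominus> x \<in> S" if x: "x \<in> S" for x
  proof -
    obtain r where r: "r \<in> A" "i \<otimes> x = q \<otimes> r" and xc: "x \<in> carrier R" using x unfolding S_def by blast
    have "i \<otimes> (\<ominus> x) = \<ominus> (i \<otimes> x)" using i xc by (rule r_minus)
    also have "\<dots> = \<ominus> (q \<otimes> r)" using r by simp
    also have "\<dots> = q \<otimes> (\<ominus> r)" using q Ac[OF r(1)] by (rule r_minus[symmetric])
    finally have e: "i \<otimes> (\<ominus> x) = q \<otimes> (\<ominus> r)" .
    have "\<ominus> r \<in> A" using r(1) by (rule additive_subgroup.a_inv_closed[OF ideal.axioms(1)[OF A]])
    moreover have "\<ominus> x \<in> carrier R" using xc by (rule add.inv_closed)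
    ultimately show ?thesis using e unfolding S_def by blast
  qed
  have lmul: "z \<otimes> x \<in> S" if x: "x \<in> S" and z: "z \<in> carrier R" for x z
  proof -
    obtain r where r: "r \<in> A" "i \<otimes> x = q \<otimes> r" and xc: "x \<in> carrier R" using x unfolding S_def by blast
    have "i \<otimes> (z \<otimes> x) = z \<otimes> (i \<otimes> x)" using i z xc by (rule m_lcomm)
    also have "\<dots> = z \<otimes> (q \<otimes> r)" using r by simp
    also have "\<dots> = q \<otimes> (z \<otimes> r)" using z q Ac[OF r(1)] by (rule m_lcomm)
    finally have e: "i \<otimes> (z \<otimes> x) = q \<otimes> (z \<otimes> r)" .
    have "z \<otimes> r \<in> A" using r(1) z by (rule ideal.I_l_closed[OF A])
    moreover have "z \<otimes> x \<in> carrier R" using z xc by (rule m_closed)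
    ultimately show ?thesis using e unfolding S_def by blast
  qed
  have "ideal S R"
  proof (rule idealI[OF ring_axioms])
    show "subgroup S (add_monoid R)"
    proof (rule subgroup.intro)
      show "S \<subseteq> carrier (add_monoid R)" using Sc by simp
      show "\<And>x y. x \<in> S \<Longrightarrow> y \<in> S \<Longrightarrow> x \<otimes>\<^bsub>add_monoid R\<^esub> y \<in> S" using add by simp
      show "\<one>\<^bsub>add_monoid R\<^esub> \<in> S" using zero by simp
      show "\<And>x. x \<in> S \<Longrightarrow> inv\<^bsub>add_monoid R\<^esub> x \<in> S"
      proof -
        fix x assume x: "x \<in> S"
        have "inv\<^bsub>add_monoid R\<^esub> x = \<ominus> x" by (simp add: a_inv_def)
        then show "inv\<^bsub>add_monoid R\<^esub> x \<in> S" using neg[OF x] by simp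
      qed
    qed
    show "\<And>a x. a \<in> S \<Longrightarrow> x \<in> carrier R \<Longrightarrow> x \<otimes> a \<in> S" by (rule lmul)
    show "\<And>a x. a \<in> S \<Longrightarrow> x \<in> carrier R \<Longrightarrow> a \<otimes> x \<in> S"
    proof -
      fix a x assume a: "a \<in> S" and x: "x \<in> carrier R"
      have "a \<otimes> x = x \<otimes> a" using Sc a x by (intro m_comm) auto
      then show "a \<otimes> x \<in> S" using lmul[OF a x] by simp
    qed
  qed
  then show ?thesis unfolding S_def .
qed

lemma (in cring) mult_image_ideal:
  assumes A: "ideal A R" and q: "q \<in> carrier R"
  shows "ideal ((\<lambda>l. q \<otimes> l) ` A) R"
proof -
  have "(\<lambda>l. q \<otimes> l) ` A = {l \<in> carrier R. \<exists>r\<in>A. \<one> \<otimes> l = q \<otimes> r}"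
  proof
    show "(\<lambda>l. q \<otimes> l) ` A \<subseteq> {l \<in> carrier R. \<exists>r\<in>A. \<one> \<otimes> l = q \<otimes> r}"
    proof (rule image_subsetI)
      fix r assume r: "r \<in> A"
      have rc: "r \<in> carrier R" using r by (rule ideal.Icarr[OF A])
      have "q \<otimes> r \<in> carrier R" using q rc by (rule m_closed)
      moreover have "\<one> \<otimes> (q \<otimes> r) = q \<otimes> r" using q rc by simp
      ultimately show "q \<otimes> r \<in> {l \<in> carrier R. \<exists>r\<in>A. \<one> \<otimes> l = q \<otimes> r}" using r by blast
    qed
    show "{l \<in> carrier R. \<exists>r\<in>A. \<one> \<otimes> l = q \<otimes> r} \<subseteq> (\<lambda>l. q \<otimes> l) ` A"
    proof
      fix l assume "l \<in> {l \<in> carrier R. \<exists>r\<in>A. \<one> \<otimes> l = q \<otimes> r}"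
      then obtain r where l: "l \<in> carrier R" "r \<in> A" "\<one> \<otimes> l = q \<otimes> r" by blast
      have "l = q \<otimes> r" using l by simp
      then show "l \<in> (\<lambda>l. q \<otimes> l) ` A" using l(2) by blast
    qed
  qed
  then show ?thesis using quot_ideal[OF A one_closed q] by simp
qed

lemma (in cring) nzd_cancel:
  assumes "nonzerodivisor R q" "a \<in> carrier R" "b \<in> carrier R" "q \<otimes> a = q \<otimes> b"
  shows "a = b"
proof -
  have q: "q \<in> carrier R" using assms(1) unfolding nonzerodivisor_def by (rule conjunct1)
  have "q \<otimes> (a \<ominus> b) = q \<otimes> a \<ominus> q \<otimes> b" using assms(2,3) q by (simp add: minus_eq r_distr r_minus)
  also have "\<dots> = \<zero>" using assms(3,4) q by simp
  finally have e: "q \<otimes> (a \<ominus> b) = \<zero>" .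
  have "a \<ominus> b \<in> carrier R" using assms(2,3) by simp
  then have "a \<ominus> b = \<zero>" using assms(1) e unfolding nonzerodivisor_def by blast
  then show ?thesis using assms(2,3) by simp
qed

lemma (in cring) main_aux:
  fixes m I J L :: "'a set" and q :: 'a
    and M :: "('a, 'm) module"
  assumes "one_dim_CM_local_ring R m"
    and "regular_ideal R I" and "regular_ideal R J"
    and "q \<in> I"
    and "ideal_prod R I J = (\<lambda>j. q \<otimes>\<^bsub>R\<^esub> j) ` J"
    and "module R M" and "L = trace_ideal R M"
    and "regular_ideal R L"
    and "L \<subseteq> trace_ideal R (ideal_module R J)"
  shows "ideal_prod R I L = (\<lambda>l. q \<otimes>\<^bsub>R\<^esub> l) ` L"
proof -
  have II: "ideal I R" and IJ: "ideal J R" and IL: "ideal L R"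
    using assms(2,3,8) regular_ideal_def by auto
  have Ic: "\<And>x. x \<in> I \<Longrightarrow> x \<in> carrier R" by (rule ideal.Icarr[OF II])
  have Jc: "\<And>x. x \<in> J \<Longrightarrow> x \<in> carrier R" by (rule ideal.Icarr[OF IJ])
  have Lc: "\<And>x. x \<in> L \<Longrightarrow> x \<in> carrier R" by (rule ideal.Icarr[OF IL])
  have qc: "q \<in> carrier R" using assms(4) Ic by blast
  obtain x where x: "x \<in> I" "nonzerodivisor R x" using assms(2) unfolding regular_ideal_def by auto
  obtain y where y: "y \<in> J" "nonzerodivisor R y" using assms(3) unfolding regular_ideal_def by auto
  have "x \<otimes> y \<in> ideal_prod R I J" using x(1) y(1) by (rule ideal_prod.prod)
  then obtain j0 where j0: "j0 \<in> J" "x \<otimes> y = q \<otimes> j0" using assms(5) by auto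
  have qnzd: "nonzerodivisor R q"
    unfolding nonzerodivisor_def
  proof (intro conjI qc ballI impI)
    fix z assume z: "z \<in> carrier R" "q \<otimes> z = \<zero>"
    have xc: "x \<in> carrier R" using x Ic by blast
    have yc: "y \<in> carrier R" using y Jc by blast
    have j0c: "j0 \<in> carrier R" using j0 Jc by blast
    have "x \<otimes> (y \<otimes> z) = (x \<otimes> y) \<otimes> z" using xc yc z by (simp add: m_assoc)
    also have "\<dots> = (q \<otimes> j0) \<otimes> z" using j0 by simp
    also have "\<dots> = j0 \<otimes> (q \<otimes> z)" using j0c qc z by (simp add: m_ac)
    finally have "x \<otimes> (y \<otimes> z) = j0 \<otimes> (q \<otimes> z)" .
    also have "\<dots> = \<zero>" using z j0 Jc by simp
    finally have "y \<otimes> z = \<zero>" using x(2) yc z unfolding nonzerodivisor_def by auto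
    then show "z = \<zero>" using y(2) z unfolding nonzerodivisor_def by auto
  qed
  have key1: "\<forall>l\<in>trace_ideal R (ideal_module R J). \<exists>r\<in>carrier R. i \<otimes> l = q \<otimes> r"
    if i: "i \<in> I" for i
  proof -
    have "trace_ideal R (ideal_module R J) \<subseteq> {l \<in> carrier R. \<exists>r\<in>carrier R. i \<otimes> l = q \<otimes> r}"
      unfolding trace_ideal_def
    proof (rule genideal_minimal[OF quot_ideal[OF oneideal Ic[OF i] qc]])
      show "(\<Union>f\<in>module_dual R (ideal_module R J). f ` carrier (ideal_module R J))
          \<subseteq> {l \<in> carrier R. \<exists>r\<in>carrier R. i \<otimes> l = q \<otimes> r}"
      proof safe
        fix g j assume g: "g \<in> module_dual R (ideal_module R J)" and j: "j \<in> carrier (ideal_module R J)"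
        have jJ: "j \<in> J" using j by (simp add: ideal_module_def)
        have gJ: "\<And>t. t \<in> J \<Longrightarrow> g t \<in> carrier R" using g
          by (auto simp: module_dual_def ideal_module_def)
        have gs: "\<And>a t. a \<in> carrier R \<Longrightarrow> t \<in> J \<Longrightarrow> g (a \<otimes> t) = a \<otimes> g t" using g
          by (auto simp: module_dual_def ideal_module_def)
        show "g j \<in> carrier R" using gJ jJ .
        have "i \<otimes> j \<in> ideal_prod R I J" using i jJ by (rule ideal_prod.prod)
        then obtain j' where j': "j' \<in> J" "i \<otimes> j = q \<otimes> j'" using assms(5) by auto
        have "i \<otimes> g j = g (i \<otimes> j)" using gs i jJ Ic by simp
        also have "\<dots> = q \<otimes> g j'" using j' gs qc by simp
        finally show "\<exists>r\<in>carrier R. i \<otimes> g j = q \<otimes> r" using gJ j' by blast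
      qed
    qed
    then show ?thesis by blast
  qed
  have key2: "\<exists>r\<in>L. i \<otimes> l = q \<otimes> r" if i: "i \<in> I" and l: "l \<in> L" for i l
  proof -
    have ic: "i \<in> carrier R" using Ic i .
    define \<phi> where "\<phi> = (\<lambda>l. SOME r. r \<in> carrier R \<and> i \<otimes> l = q \<otimes> r)"
    have phi: "\<phi> t \<in> carrier R \<and> i \<otimes> t = q \<otimes> \<phi> t" if "t \<in> L" for t
    proof -
      have "\<exists>r. r \<in> carrier R \<and> i \<otimes> t = q \<otimes> r" using key1[OF i] that assms(9) by blast
      then show ?thesis unfolding \<phi>_def by (rule someI_ex)
    qed
    let ?S = "\<Union>f\<in>module_dual R M. f ` carrier M"
    have SL: "?S \<subseteq> L" unfolding assms(7) trace_ideal_def genideal_def by blast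
    have "L \<subseteq> {l \<in> carrier R. \<exists>r\<in>L. i \<otimes> l = q \<otimes> r}"
      unfolding assms(7) trace_ideal_def
    proof (rule genideal_minimal[OF quot_ideal[OF IL[unfolded assms(7) trace_ideal_def] ic qc]])
      show "?S \<subseteq> {l \<in> carrier R. \<exists>r\<in>Idl ?S. i \<otimes> l = q \<otimes> r}"
      proof safe
        fix f z assume f: "f \<in> module_dual R M" and z: "z \<in> carrier M"
        have fc: "\<And>t. t \<in> carrier M \<Longrightarrow> f t \<in> carrier R" using f by (auto simp: module_dual_def)
        have fL: "\<And>t. t \<in> carrier M \<Longrightarrow> f t \<in> L" using f SL by blast
        have fa: "\<And>s t. s \<in> carrier M \<Longrightarrow> t \<in> carrier M \<Longrightarrow> f (s \<oplus>\<^bsub>M\<^esub> t) = f s \<oplus> f t"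
          using f by (auto simp: module_dual_def)
        have fs: "\<And>a t. a \<in> carrier R \<Longrightarrow> t \<in> carrier M \<Longrightarrow> f (a \<odot>\<^bsub>M\<^esub> t) = a \<otimes> f t"
          using f by (auto simp: module_dual_def)
        have addc: "\<And>s t. s \<in> carrier M \<Longrightarrow> t \<in> carrier M \<Longrightarrow> s \<oplus>\<^bsub>M\<^esub> t \<in> carrier M"
          using assms(6) by (simp add: module.axioms(2) abelian_group.axioms(1) abelian_monoid.a_closed)
        have smc: "\<And>a t. a \<in> carrier R \<Longrightarrow> t \<in> carrier M \<Longrightarrow> a \<odot>\<^bsub>M\<^esub> t \<in> carrier M"
          using assms(6) by (simp add: module.smult_closed)
        have "\<phi> \<circ> f \<in> module_dual R M"
          unfolding module_dual_def
        proof (safe)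
          fix t assume "t \<in> carrier M" then show "(\<phi> \<circ> f) t \<in> carrier R" using phi fL by simp
        next
          fix s t assume s: "s \<in> carrier M" and t: "t \<in> carrier M"
          have "q \<otimes> \<phi> (f (s \<oplus>\<^bsub>M\<^esub> t)) = i \<otimes> f (s \<oplus>\<^bsub>M\<^esub> t)" by (rule conjunct2[OF phi[OF fL[OF addc[OF s t]]], symmetric])
          also have "\<dots> = i \<otimes> f s \<oplus> i \<otimes> f t" using fa s t fc ic by (simp add: r_distr)
          also have "\<dots> = q \<otimes> (\<phi> (f s) \<oplus> \<phi> (f t))" using phi fL s t qc by (simp add: r_distr)
          finally have "\<phi> (f (s \<oplus>\<^bsub>M\<^esub> t)) = \<phi> (f s) \<oplus> \<phi> (f t)"
            by (rule nzd_cancel[OF qnzd, rotated 2]) (use phi fL addc s t in auto)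
          then show "(\<phi> \<circ> f) (s \<oplus>\<^bsub>M\<^esub> t) = (\<phi> \<circ> f) s \<oplus> (\<phi> \<circ> f) t" by simp
        next
          fix a t assume a: "a \<in> carrier R" and t: "t \<in> carrier M"
          have "q \<otimes> \<phi> (f (a \<odot>\<^bsub>M\<^esub> t)) = i \<otimes> f (a \<odot>\<^bsub>M\<^esub> t)" by (rule conjunct2[OF phi[OF fL[OF smc[OF a t]]], symmetric])
          also have "\<dots> = a \<otimes> (i \<otimes> f t)" using fs a t fc ic by (simp add: m_lcomm)
          also have "\<dots> = a \<otimes> (q \<otimes> \<phi> (f t))" using conjunct2[OF phi[OF fL[OF t]]] by simp
          also have "\<dots> = q \<otimes> (a \<otimes> \<phi> (f t))" using phi fL t a qc by (simp add: m_lcomm)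
          finally have "\<phi> (f (a \<odot>\<^bsub>M\<^esub> t)) = a \<otimes> \<phi> (f t)"
            by (rule nzd_cancel[OF qnzd, rotated 2]) (use phi fL smc a t in auto)
          then show "(\<phi> \<circ> f) (a \<odot>\<^bsub>M\<^esub> t) = a \<otimes> (\<phi> \<circ> f) t" by simp
        qed
        then have "(\<phi> \<circ> f) z \<in> ?S" using z by blast
        then have "\<phi> (f z) \<in> ?S" by simp
        then have "\<phi> (f z) \<in> Idl ?S" using SL unfolding genideal_def by blast
        then show "\<exists>r\<in>Idl ?S. i \<otimes> f z = q \<otimes> r" using phi fL z by blast
        show "f z \<in> carrier R" using fc z .
      qed
    qed
    then show ?thesis using l by blast
  qed
  show ?thesis
  proof
    show "ideal_prod R I L \<subseteq> (\<lambda>l. q \<otimes> l) ` L"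
    proof
      fix s assume "s \<in> ideal_prod R I L"
      then show "s \<in> (\<lambda>l. q \<otimes> l) ` L"
      proof (induct s rule: ideal_prod.induct)
        case (prod i j)
        from key2[OF prod] obtain r where "r \<in> L" "i \<otimes> j = q \<otimes> r" by blast
        then show ?case by (simp add: image_iff) (rule bexI[of _ r], auto)
      next
        case (sum s1 s2) show ?case using sum(2,4)
          by (rule additive_subgroup.a_closed[OF ideal.axioms(1)[OF mult_image_ideal[OF IL qc]]])
      qed
    qed
    show "(\<lambda>l. q \<otimes> l) ` L \<subseteq> ideal_prod R I L"
    proof (rule image_subsetI)
      fix l assume "l \<in> L"
      then show "q \<otimes> l \<in> ideal_prod R I L" by (rule ideal_prod.prod[OF assms(4)])
    qed
  qed
qed

theorem lemma2p4:
  fixes R :: "'a ring" and m I J L :: "'a set" and q :: 'a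
    and M :: "('a, 'm) module"
  assumes "one_dim_CM_local_ring R m"
    and "regular_ideal R I" and "regular_ideal R J"
    and "q \<in> I"
    and "ideal_prod R I J = (\<lambda>j. q \<otimes>\<^bsub>R\<^esub> j) ` J"
    and "module R M" and "L = trace_ideal R M"
    and "regular_ideal R L"
    and "L \<subseteq> trace_ideal R (ideal_module R J)"
  shows "ideal_prod R I L = (\<lambda>l. q \<otimes>\<^bsub>R\<^esub> l) ` L"
proof -
  have "cring R" using assms(1) unfolding one_dim_CM_local_ring_def local_ring_def by simp
  then show ?thesis by (rule cring.main_aux[OF _ assms])
qed

end
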